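(* Let $q>1$ and $a>0$. Define the probability distribution $p^{(a)}$ on $\mathbb{Z}$ by $$p^{(a)}_k=\begin{cases}f_q(a)^{-1}\Big(1-\dfrac{k^2}{a^2}\Big)^{\frac{1}{q-1}} & \text{if } |k|<a,\\ 0&\text{otherwise,}\end{cases}\qquad f_q(a)=\sum_{k\in\mathbb{Z},\,|k|<a}\Big(1-\frac{k^2}{a^2}\Big)^{\frac{1}{q-1}}.$$ Let $\sigma^2=\sum_k k^2p^{(a)}_k$. Then $p^{(a)}$ has zero mean and maximizes the Tsallis entropy $H_q$ over all probability distributions $p$ on $\mathbb{Z}$ satisfying $\sum_k k\,p_k=0$ and $\sum_k k^2p_k=\sigma^2$.
   Context: For a probability distribution $p=(p_k)_{k\in\mathbb{Z}}$ on $\mathbb{Z}$ and $q\neq 1$, the Tsallis entropy is $H_q(p)=\frac{1}{q-1}\big(1-\sum_{k\in\mathbb{Z}}p_k^q\big)$. *)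

theory Defs
  imports "HOL-Analysis.Analysis"
begin

definition prob_dist_int :: "(int \<Rightarrow> real) \<Rightarrow> bool" where
  "prob_dist_int p \<longleftrightarrow> (\<forall>k. 0 \<le> p k) \<and> (p has_sum 1) UNIV"

definition tsallis :: "real \<Rightarrow> (int \<Rightarrow> real) \<Rightarrow> real" where
  "tsallis q p = (1 - (\<Sum>\<^sub>\<infinity>k\<in>UNIV. p k powr q)) / (q - 1)"

definition fq :: "real \<Rightarrow> real \<Rightarrow> real" where
  "fq q a = (\<Sum>k\<in>{k::int. \<bar>real_of_int k\<bar> < a}.
               (1 - (real_of_int k)\<^sup>2 / a\<^sup>2) powr (1 / (q - 1)))"

definition pa :: "real \<Rightarrow> real \<Rightarrow> int \<Rightarrow> real" where
  "pa q a k = (if \<bar>real_of_int k\<bar> < a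
               then (1 - (real_of_int k)\<^sup>2 / a\<^sup>2) powr (1 / (q - 1)) / fq q a
               else 0)"

end

theory Submission
  imports Defs
begin

lemma tangent_powr:
  fixes x y q :: real
  assumes "q > 1" "x \<ge> 0" "y > 0"
  shows "x powr q \<ge> y powr q + q * y powr (q - 1) * (x - y)"
proof (cases "x = 0")
  case True
  have "y powr q = y powr (q-1) * y" using assms
    by (simp add: powr_diff)
  then show ?thesis using True assms by (simp add: algebra_simps)
next
  case False
  have d: "((\<lambda>x. x powr q) has_field_derivative q * y powr (q - 1)) (at y within {0<..})"
    using assms by (auto intro!: derivative_eq_intros)
  have "x powr q - y powr q \<ge> q * y powr (q - 1) * (x - y)"
    by (rule convex_on_imp_above_tangent[OF powr_convex _ _ _ d])
       (use assms False in \<open>auto simp: interior_open\<close>)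
  then show ?thesis by simp
qed

lemma has_sum_le_one:
  fixes p :: "int \<Rightarrow> real"
  assumes "prob_dist_int p"
  shows "p k \<le> 1"
proof -
  have h: "(p has_sum 1) UNIV" and nn: "\<And>j. 0 \<le> p j" using assms by (auto simp: prob_dist_int_def)
  have "(p has_sum p k) {k}" by (rule has_sum_finiteI) auto
  then show ?thesis
    by (rule has_sum_mono_neutral[OF _ h]) (auto simp: nn)
qed

theorem theorem2:
  fixes q a :: real
  assumes "q > 1" and "a > 0"
  defines "\<sigma>2 \<equiv> (\<Sum>\<^sub>\<infinity>k\<in>UNIV. (real_of_int k)\<^sup>2 * pa q a k)"
  shows "prob_dist_int (pa q a)
    \<and> ((\<lambda>k. real_of_int k * pa q a k) has_sum 0) UNIV
    \<and> (\<forall>p. prob_dist_int p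
           \<and> ((\<lambda>k. real_of_int k * p k) has_sum 0) UNIV
           \<and> ((\<lambda>k. (real_of_int k)\<^sup>2 * p k) has_sum \<sigma>2) UNIV
           \<longrightarrow> tsallis q p \<le> tsallis q (pa q a))"
proof -
  define S where "S = {k::int. \<bar>real_of_int k\<bar> < a}"
  define w where "w = (\<lambda>k::int. (1 - (real_of_int k)\<^sup>2 / a\<^sup>2) powr (1 / (q - 1)))"
  define F where "F = fq q a"
  have F_def': "F = sum w S" unfolding F_def fq_def S_def w_def by simp
  have pa_eq: "pa q a k = (if k \<in> S then w k / F else 0)" for k
    unfolding pa_def S_def w_def F_def by simp
  have finS: "finite S"
  proof (rule finite_subset)
    show "S \<subseteq> {-\<lceil>a\<rceil>..\<lceil>a\<rceil>}"
      unfolding S_def by (auto simp: abs_less_iff) (linarith+)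
  qed auto
  have S_iff: "k \<in> S \<longleftrightarrow> (real_of_int k)\<^sup>2 / a\<^sup>2 < 1" for k
  proof -
    have "k \<in> S \<longleftrightarrow> \<bar>real_of_int k\<bar> < \<bar>a\<bar>" using assms by (simp add: S_def)
    also have "\<dots> \<longleftrightarrow> (real_of_int k)\<^sup>2 < a\<^sup>2" by (meson abs_le_square_iff not_le)
    also have "\<dots> \<longleftrightarrow> (real_of_int k)\<^sup>2 / a\<^sup>2 < 1" using assms by (simp add: divide_less_eq)
    finally show ?thesis .
  qed
  have wpos: "k \<in> S \<Longrightarrow> w k > 0" for k using S_iff[of k] assms by (auto simp: w_def)
  have w_nn: "w k \<ge> 0" for k by (simp add: w_def)
  have "0 \<in> S" using assms by (simp add: S_def)
  have Fpos: "F > 0" unfolding F_def'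
    using finS \<open>0 \<in> S\<close> wpos by (meson sum_pos2 w_nn)
  have pa_nn: "pa q a k \<ge> 0" for k using Fpos w_nn by (simp add: pa_eq)
  have S_sym: "-k \<in> S \<longleftrightarrow> k \<in> S" for k by (simp add: S_def)
  have pa_sym: "pa q a (-k) = pa q a k" for k by (simp add: pa_eq S_sym w_def)
  have pa_sum: "(pa q a has_sum 1) UNIV"
  proof (rule has_sum_finite_neutralI[OF finS])
    show "1 = (\<Sum>x\<in>S. pa q a x)" using Fpos
      by (simp add: pa_eq sum_divide_distrib[symmetric] F_def')
  qed (auto simp: pa_eq)
  have P1: "prob_dist_int (pa q a)" using pa_sum pa_nn by (simp add: prob_dist_int_def)
  have sym0: "(\<Sum>k\<in>S. real_of_int k * pa q a k) = 0"
  proof -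
    have "(\<Sum>k\<in>S. real_of_int k * pa q a k) = (\<Sum>k\<in>S. real_of_int (-k) * pa q a (-k))"
      by (rule sum.reindex_bij_witness[of _ uminus uminus]) (auto simp: S_sym)
    also have "\<dots> = - (\<Sum>k\<in>S. real_of_int k * pa q a k)"
      by (simp add: pa_sym sum_negf)
    finally show ?thesis by simp
  qed
  have P2: "((\<lambda>k. real_of_int k * pa q a k) has_sum 0) UNIV"
  proof (rule has_sum_finite_neutralI[OF finS])
    show "0 = (\<Sum>k\<in>S. real_of_int k * pa q a k)" using sym0 by simp
  qed (auto simp: pa_eq)
  have var_sum: "((\<lambda>k. (real_of_int k)\<^sup>2 * pa q a k) has_sum \<sigma>2) UNIV"
  proof -
    have "((\<lambda>k. (real_of_int k)\<^sup>2 * pa q a k) has_sum (\<Sum>k\<in>S. (real_of_int k)\<^sup>2 * pa q a k)) UNIV"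
      by (rule has_sum_finite_neutralI[OF finS]) (auto simp: pa_eq)
    moreover then have "\<sigma>2 = (\<Sum>k\<in>S. (real_of_int k)\<^sup>2 * pa q a k)"
      unfolding \<sigma>2_def by (rule infsumI)
    ultimately show ?thesis by simp
  qed
  define A where "A = (\<Sum>k\<in>S. pa q a k powr q)"
  have paq_sum: "((\<lambda>k. pa q a k powr q) has_sum A) UNIV"
    unfolding A_def by (rule has_sum_finite_neutralI[OF finS]) (auto simp: pa_eq)
  have tpa: "tsallis q (pa q a) = (1 - A) / (q - 1)"
    unfolding tsallis_def using paq_sum by (simp add: infsumI)
  define c where "c = F powr (1 - q)"
  have pa_pow: "k \<in> S \<Longrightarrow> pa q a k powr (q - 1) = c * (1 - (real_of_int k)\<^sup>2 / a\<^sup>2)" for k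
  proof -
    assume kS: "k \<in> S"
    have u: "1 - (real_of_int k)\<^sup>2 / a\<^sup>2 > 0" using S_iff[of k] kS by simp
    have "pa q a k powr (q - 1) = w k powr (q - 1) / F powr (q - 1)"
      using kS Fpos w_nn by (simp add: pa_eq powr_divide)
    also have "w k powr (q - 1) = (1 - (real_of_int k)\<^sup>2 / a\<^sup>2)"
      using u assms by (simp add: w_def powr_powr)
    also have "1 / F powr (q - 1) = c" unfolding c_def using Fpos
      by (simp add: powr_minus_divide[symmetric] )
    ultimately show ?thesis by (simp add: divide_inverse mult.commute)
  qed
  have cnn: "c \<ge> 0" by (simp add: c_def)
  have P3: "tsallis q p \<le> tsallis q (pa q a)"
    if pd: "prob_dist_int p" and m2: "((\<lambda>k. (real_of_int k)\<^sup>2 * p k) has_sum \<sigma>2) UNIV" for p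
  proof -
    have psum: "(p has_sum 1) UNIV" and pnn: "\<And>k. 0 \<le> p k" using pd by (auto simp: prob_dist_int_def)
    have ple: "p k \<le> 1" for k using has_sum_le_one[OF pd] .
    have "(\<lambda>k. p k powr q) summable_on UNIV"
    proof (rule summable_on_comparison_test)
      show "p summable_on UNIV" using psum by (auto simp: summable_on_def)
      show "p k powr q \<le> p k" for k
        using powr_mono'[of 1 q "p k"] assms pnn[of k] ple[of k] by simp
    qed simp
    then have pq_sum: "((\<lambda>k. p k powr q) has_sum (\<Sum>\<^sub>\<infinity>k\<in>UNIV. p k powr q)) UNIV"
      by (rule has_sum_infsum)
    define g where "g = (\<lambda>k. pa q a k powr q + (q*c) * p k + (-(q*c)) * pa q a k
        + (-(q*c)/a\<^sup>2) * ((real_of_int k)\<^sup>2 * p k) + ((q*c)/a\<^sup>2) * ((real_of_int k)\<^sup>2 * pa q a k))"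
    have g_sum: "(g has_sum (A + (q*c) * 1 + (-(q*c)) * 1 + (-(q*c)/a\<^sup>2) * \<sigma>2 + ((q*c)/a\<^sup>2) * \<sigma>2)) UNIV"
      unfolding g_def
      by (intro has_sum_add has_sum_cmult_right paq_sum psum pa_sum m2 var_sum)
    have g_le: "g k \<le> p k powr q" for k
    proof (cases "k \<in> S")
      case True
      have "pa q a k > 0" using True wpos Fpos by (simp add: pa_eq)
      from tangent_powr[OF assms(1) pnn this]
      have "p k powr q \<ge> pa q a k powr q + q * (c * (1 - (real_of_int k)\<^sup>2 / a\<^sup>2)) * (p k - pa q a k)"
        using pa_pow[OF True] by simp
      moreover have "g k = pa q a k powr q + q * (c * (1 - (real_of_int k)\<^sup>2 / a\<^sup>2)) * (p k - pa q a k)"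
        unfolding g_def using assms by (simp add: field_simps)
      ultimately show ?thesis by simp
    next
      case False
      then have "(real_of_int k)\<^sup>2 / a\<^sup>2 \<ge> 1" using S_iff[of k] by simp
      then have "1 - (real_of_int k)\<^sup>2 / a\<^sup>2 \<le> 0" by simp
      moreover have "g k = (q*c) * (p k * (1 - (real_of_int k)\<^sup>2 / a\<^sup>2))"
        unfolding g_def using False by (simp add: pa_eq algebra_simps)
      moreover have "q * c \<ge> 0" using cnn assms by simp
      ultimately have "g k \<le> 0"
        by (simp add: mult_nonneg_nonpos pnn)
      then show ?thesis by (meson order_trans powr_ge_zero)
    qed
    have "A \<le> (\<Sum>\<^sub>\<infinity>k\<in>UNIV. p k powr q)"
      using has_sum_mono[OF g_sum pq_sum g_le] by simp
    then have "(1 - (\<Sum>\<^sub>\<infinity>k\<in>UNIV. p k powr q)) / (q - 1) \<le> (1 - A) / (q - 1)"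
      using assms by (simp add: divide_right_mono)
    then show ?thesis unfolding tpa by (simp add: tsallis_def)
  qed
  show ?thesis using P1 P2 P3 by blast
qed

end
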